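(* Let $1 \leq p < +\infty$ and let $\mathbb{P}$ be a Borel probability measure over $\mathbb{R}$ (i.e. a probability measure defined on the Borel $\sigma$-algebra $\mathcal{B}_{\mathbb{R}}$ of $\mathbb{R}$). Then for every real number $M \geq 0$, the set of $M$-sensitive random variables is dense in $L^{p}(\mathbb{R}, \mathcal{B}_{\mathbb{R}}, \mathbb{P})$ with respect to the $L^{p}$-norm: for every $X \in L^{p}(\mathbb{R}, \mathcal{B}_{\mathbb{R}}, \mathbb{P})$ and every $\varepsilon > 0$ there is an $M$-sensitive random variable $Y$ with $\|Y - X\|_{L^{p}(\mathbb{P})} < \varepsilon$.
   Context: A Borel random variable on $\mathbb{R}$ is an $\mathbb{R}$-valued Borel-measurable function defined on $\mathbb{R}$. Given a real number $M \geq 0$, a Borel random variable $Y$ on $\mathbb{R}$ is called $M$-sensitive if and only if $Y \in L^{\infty}(\mathbb{R}, \mathcal{B}_{\mathbb{R}}, \mathbb{P})$, $Y$ is differentiable at Lebesgue-almost every point of $\mathbb{R}$, and $|Y'(x)| > M$ at every point $x$ at which $Y$ is differentiable. *)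

theory Defs
  imports "HOL-Probability.Probability"
begin

definition Linfty :: "real measure \<Rightarrow> (real \<Rightarrow> real) \<Rightarrow> bool" where
  "Linfty P Y \<longleftrightarrow> Y \<in> borel_measurable P \<and> (\<exists>C. AE x in P. \<bar>Y x\<bar> \<le> C)"

definition M_sensitive :: "real measure \<Rightarrow> real \<Rightarrow> (real \<Rightarrow> real) \<Rightarrow> bool" where
  "M_sensitive P M Y \<longleftrightarrow>
     Linfty P Y \<and>
     (AE x in lebesgue. Y differentiable (at x)) \<and>
     (\<forall>x D. (Y has_real_derivative D) (at x) \<longrightarrow> \<bar>D\<bar> > M)"

definition Lp_mem :: "real measure \<Rightarrow> real \<Rightarrow> (real \<Rightarrow> real) \<Rightarrow> bool" where
  "Lp_mem P p X \<longleftrightarrow> X \<in> borel_measurable P \<and> integrable P (\<lambda>x. \<bar>X x\<bar> powr p)"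

definition Lp_norm :: "real measure \<Rightarrow> real \<Rightarrow> (real \<Rightarrow> real) \<Rightarrow> real" where
  "Lp_norm P p X = (\<integral>x. \<bar>X x\<bar> powr p \<partial>P) powr (1 / p)"

end

theory Submission
  imports Defs
begin


lemma deriv_right_affine:
  fixes Y :: "real \<Rightarrow> real"
  assumes D: "(Y has_real_derivative D) (at x)" and e: "e > 0"
    and aff: "\<And>t. x \<le> t \<Longrightarrow> t < x + e \<Longrightarrow> Y t = a + K * t"
  shows "D = K"
proof -
  have D': "(Y has_real_derivative D) (at x within {x..})"
    using D by (rule has_field_derivative_at_within)
  have "((\<lambda>t. a + K * t) has_real_derivative D) (at x within {x..})"
    apply (rule has_field_derivative_transform_within[OF D' e])
    using aff by (auto simp: dist_real_def)
  moreover have "((\<lambda>t. a + K * t) has_real_derivative K) (at x within {x..})"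
    by (auto intro!: derivative_eq_intros)
  moreover have "at x within {x..} \<noteq> bot"
  proof -
    have "{x..} - {x} = {x<..}" by auto
    then show ?thesis by (simp add: at_within_eq_bot_iff)
  qed
  ultimately show ?thesis
    using has_field_derivative_unique by blast
qed

definition sawY :: "(int \<Rightarrow> real) \<Rightarrow> real \<Rightarrow> real \<Rightarrow> real \<Rightarrow> real" where
  "sawY \<phi> d K x = \<phi> \<lfloor>x / d\<rfloor> + K * (x - d * \<lfloor>x / d\<rfloor>)"

lemma floor_const_right:
  fixes d x t :: real
  assumes "d > 0" "x \<le> t" "t < d * (\<lfloor>x/d\<rfloor> + 1)"
  shows "\<lfloor>t/d\<rfloor> = \<lfloor>x/d\<rfloor>"
proof -
  have "x/d \<le> t/d" using assms by (simp add: divide_right_mono)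
  moreover have "t/d < \<lfloor>x/d\<rfloor> + 1" using assms by (simp add: pos_divide_less_eq mult.commute)
  moreover have "real_of_int \<lfloor>x/d\<rfloor> \<le> x/d" by (rule of_int_floor_le)
  ultimately show ?thesis unfolding floor_eq_iff by linarith
qed

lemma sawY_deriv:
  assumes "d > 0" "(sawY \<phi> d K has_real_derivative D) (at x)"
  shows "D = K"
proof -
  define k where "k = \<lfloor>x/d\<rfloor>"
  have "x/d < k + 1" unfolding k_def by linarith
  then have "x < d * (k + 1)" using assms(1) by (simp add: pos_divide_less_eq mult.commute)
  show ?thesis
  proof (rule deriv_right_affine[OF assms(2), of "d * (k+1) - x" "\<phi> k - K * d * k"])
    show "0 < d * (k+1) - x" using \<open>x < d * (k + 1)\<close> by simp
    fix t assume "x \<le> t" "t < x + (d * (k+1) - x)"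
    then have "\<lfloor>t/d\<rfloor> = k" using floor_const_right[OF assms(1), of x t] k_def by simp
    then show "sawY \<phi> d K t = \<phi> k - K * d * k + K * t"
      by (simp add: sawY_def algebra_simps)
  qed
qed

lemma sawY_differentiable:
  assumes "d > 0" "x \<notin> range (\<lambda>k::int. d * real_of_int k)"
  shows "sawY \<phi> d K differentiable (at x)"
proof -
  define k where "k = \<lfloor>x/d\<rfloor>"
  have "k \<le> x/d" unfolding k_def by (rule of_int_floor_le)
  then have lo: "d * k \<le> x" using assms(1) by (simp add: pos_le_divide_eq mult.commute)
  have "d * k \<noteq> x" using assms(2) by auto
  with lo have lo': "d * k < x" by simp
  have "x/d < k + 1" unfolding k_def by linarith
  then have hi: "x < d * (k + 1)" using assms(1) by (simp add: pos_divide_less_eq mult.commute)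
  have "((\<lambda>t. \<phi> k - K * d * k + K * t) has_real_derivative K) (at x)"
    by (auto intro!: derivative_eq_intros)
  then have "(sawY \<phi> d K has_real_derivative K) (at x)"
  proof (rule has_field_derivative_transform_within_open[where S = "{d*k<..<d*(k+1)}"])
    show "open {d*k<..<d*(k+1)}" by simp
    show "x \<in> {d*k<..<d*(k+1)}" using lo' hi by simp
    fix t assume t: "t \<in> {d*k<..<d*(k+1)}"
    have "\<lfloor>t/d\<rfloor> = k"
    proof -
      have "k \<le> t/d" using t assms(1) by (simp add: pos_le_divide_eq mult.commute)
      moreover have "t/d < k + 1" using t assms(1) by (simp add: pos_divide_less_eq mult.commute)
      ultimately show ?thesis unfolding floor_eq_iff by linarith
    qed
    then show "\<phi> k - K * d * k + K * t = sawY \<phi> d K t"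
      by (simp add: sawY_def algebra_simps)
  qed
  then show ?thesis using real_differentiable_def by blast
qed

lemma sawY_AE_diff:
  assumes "d > 0"
  shows "AE x in lebesgue. sawY \<phi> d K differentiable (at x)"
proof -
  have "AE x in lborel. x \<notin> range (\<lambda>k::int. d * real_of_int k)"
    by (intro AE_not_in countable_imp_null_set_lborel) auto
  then have "AE x in lborel. sawY \<phi> d K differentiable (at x)"
    by (rule AE_mp) (use sawY_differentiable[OF assms] in auto)
  then show ?thesis by (rule AE_completion)
qed

lemma sawY_measurable: "sawY \<phi> d K \<in> borel_measurable borel"
  unfolding sawY_def by measurable



lemma approx_compact_open:
  assumes P: "prob_space (P::real measure)" and sb: "sets P = sets borel" and A: "A \<in> sets borel" and e: "e > 0"
  shows "\<exists>C U. compact C \<and> open U \<and> C \<subseteq> A \<and> A \<subseteq> U \<and> measure P (U - C) < e"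
proof -
  interpret prob_space P by (rule P)
  have fin: "emeasure P (space P) \<noteq> \<infinity>" by simp
  have sp: "space P = UNIV" by (metis sb sets_eq_imp_space_eq space_borel)
  have AP: "A \<in> sets P" using A sb by simp
  define m where "m = measure P A"
  obtain C where C: "compact C" "C \<subseteq> A" "m - e/2 < measure P C"
  proof (cases "m < e/2")
    case True
    then show ?thesis using that[of "{}"] by simp
  next
    case False
    then have "ennreal (m - e/2) < ennreal m" using e by (subst ennreal_less_iff) auto
    also have "ennreal m = (SUP K \<in> {K. K \<subseteq> A \<and> compact K}. emeasure P K)"
      using inner_regular[OF sb fin A] AP unfolding m_def by (simp add: emeasure_eq_measure)
    finally obtain K where K: "K \<subseteq> A" "compact K" "ennreal (m - e/2) < emeasure P K"
      by (auto simp: less_SUP_iff)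
    have "K \<in> sets P" using K(2) sb by (simp add: borel_compact)
    then have "m - e/2 < measure P K" using K(3) False e
      by (simp add: emeasure_eq_measure ennreal_less_iff)
    then show ?thesis using that K by auto
  qed
  have "(INF U \<in> {U. A \<subseteq> U \<and> open U}. emeasure P U) = ennreal m"
    using outer_regular[OF sb fin A] AP unfolding m_def by (simp add: emeasure_eq_measure)
  also have "ennreal m < ennreal (m + e/2)" using e unfolding m_def
    by (subst ennreal_less_iff) auto
  finally obtain U where U: "A \<subseteq> U" "open U" "emeasure P U < ennreal (m + e/2)"
    by (auto simp: INF_less_iff)
  have UP: "U \<in> sets P" using U(2) sb by simp
  have CP: "C \<in> sets P" using C(1) sb by (simp add: borel_compact)
  have "measure P U < m + e/2" using U(3) by (simp add: emeasure_eq_measure ennreal_less_iff)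
  moreover have "measure P (U - C) = measure P U - measure P C"
    using UP CP C(2) U(1) by (intro finite_measure_Diff) auto
  ultimately have "measure P (U - C) < e" using C(3) by simp
  then show ?thesis using C U by blast
qed

lemma grid_cell_close:
  fixes d x c :: real
  assumes "d > 0" "\<lfloor>x/d\<rfloor> = \<lfloor>c/d\<rfloor>"
  shows "dist x c < d"
proof -
  have h1: "real_of_int \<lfloor>x/d\<rfloor> \<le> x/d" "x/d < real_of_int \<lfloor>x/d\<rfloor> + 1"
    using floor_correct[of "x/d"] by auto
  have h2: "real_of_int \<lfloor>c/d\<rfloor> \<le> c/d" "c/d < real_of_int \<lfloor>c/d\<rfloor> + 1"
    using floor_correct[of "c/d"] by auto
  have "x/d - c/d < 1" "c/d - x/d < 1" using h1 h2 unfolding assms(2) by linarith+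
  then have "(x - c)/d < 1" "(c - x)/d < 1" by (simp_all add: diff_divide_distrib)
  then have "x - c < d" "c - x < d" using assms(1) by (simp_all add: pos_divide_less_eq)
  then show ?thesis by (simp add: dist_real_def abs_less_iff)
qed

lemma indicator_grid_approx:
  assumes P: "prob_space (P::real measure)" and sb: "sets P = sets borel" and A: "A \<in> sets borel" and e: "e > 0"
  shows "\<exists>d0>0. \<forall>d. 0 < d \<longrightarrow> d \<le> d0 \<longrightarrow>
           (\<exists>Ks::int set. measure P ((A - {x. \<lfloor>x/d\<rfloor> \<in> Ks}) \<union> ({x. \<lfloor>x/d\<rfloor> \<in> Ks} - A)) < e)"
proof -
  interpret prob_space P by (rule P)
  obtain C U where CU: "compact C" "open U" "C \<subseteq> A" "A \<subseteq> U" "measure P (U - C) < e"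
    using approx_compact_open[OF P sb A e] by blast
  have "U \<in> sets borel" "C \<in> sets borel" using CU by (auto simp: borel_compact)
  then have UC: "U - C \<in> sets P" using sb by auto
  have key: "\<And>V. C \<subseteq> V \<Longrightarrow> V \<subseteq> U \<Longrightarrow> measure P ((A - V) \<union> (V - A)) < e"
  proof -
    fix V assume "C \<subseteq> V" "V \<subseteq> U"
    then have "(A - V) \<union> (V - A) \<subseteq> U - C" using CU by auto
    then have "measure P ((A - V) \<union> (V - A)) \<le> measure P (U - C)"
      using UC by (intro finite_measure_mono) auto
    then show "measure P ((A - V) \<union> (V - A)) < e" using CU by simp
  qed
  show ?thesis
  proof (cases "C = {} \<or> U = UNIV")
    case True
    show ?thesis
    proof (rule exI[of _ "1::real"], intro conjI allI impI)
      fix d :: real assume "0 < d" "d \<le> 1"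
      show "\<exists>Ks::int set. measure P ((A - {x. \<lfloor>x/d\<rfloor> \<in> Ks}) \<union> ({x. \<lfloor>x/d\<rfloor> \<in> Ks} - A)) < e"
      proof (cases "C = {}")
        case True
        have "measure P ((A - {}) \<union> ({} - A)) < e" using key[of "{}"] True CU by auto
        then show ?thesis by (intro exI[of _ "{}"]) simp
      next
        case False
        then have "U = UNIV" using \<open>C = {} \<or> U = UNIV\<close> by simp
        have "measure P ((A - UNIV) \<union> (UNIV - A)) < e" using key[of UNIV] \<open>U = UNIV\<close> CU by auto
        then show ?thesis by (intro exI[of _ UNIV]) simp
      qed
    qed simp
  next
    case False
    then have Cne: "C \<noteq> {}" and Une: "- U \<noteq> {}" by auto
    have "setdist C (- U) > 0"
      using Cne Une CU setdist_gt_0_compact_closed[OF CU(1) closed_Compl[OF CU(2)]] by auto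
    define d0 where "d0 = setdist C (- U)"
    show ?thesis
    proof (rule exI[of _ d0], intro conjI allI impI)
      show "0 < d0" using \<open>setdist C (- U) > 0\<close> d0_def by simp
      fix d :: real assume d: "0 < d" "d \<le> d0"
      define Ks where "Ks = (\<lambda>c. \<lfloor>c/d\<rfloor>) ` C"
      have "C \<subseteq> {x. \<lfloor>x/d\<rfloor> \<in> Ks}" unfolding Ks_def by auto
      moreover have "{x. \<lfloor>x/d\<rfloor> \<in> Ks} \<subseteq> U"
      proof
        fix x assume "x \<in> {x. \<lfloor>x/d\<rfloor> \<in> Ks}"
        then obtain c where c: "c \<in> C" "\<lfloor>x/d\<rfloor> = \<lfloor>c/d\<rfloor>" unfolding Ks_def by auto
        have "dist x c < d" using grid_cell_close[OF d(1) c(2)] .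
        show "x \<in> U"
        proof (rule ccontr)
          assume "x \<notin> U"
          then have "setdist C (- U) \<le> dist c x" using c(1) by (intro setdist_le_dist) auto
          then show False using \<open>dist x c < d\<close> d d0_def by (simp add: dist_commute)
        qed
      qed
      ultimately have "measure P ((A - {x. \<lfloor>x/d\<rfloor> \<in> Ks}) \<union> ({x. \<lfloor>x/d\<rfloor> \<in> Ks} - A)) < e"
        by (rule key)
      then show "\<exists>Ks::int set. measure P ((A - {x. \<lfloor>x/d\<rfloor> \<in> Ks}) \<union> ({x. \<lfloor>x/d\<rfloor> \<in> Ks} - A)) < e"
        by (rule exI)
    qed
  qed
qed



definition gapprox :: "real measure \<Rightarrow> (real \<Rightarrow> real) \<Rightarrow> bool" where
  "gapprox P f \<longleftrightarrow> (\<forall>e>0. \<exists>d0>0. \<forall>d. 0 < d \<longrightarrow> d \<le> d0 \<longrightarrow>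
      (\<exists>\<phi>::int \<Rightarrow> real. measure P {x. \<phi> \<lfloor>x/d\<rfloor> \<noteq> f x} < e))"

lemma grid_meas[measurable]: "(\<lambda>x::real. (\<phi>::int \<Rightarrow> real) \<lfloor>x/d\<rfloor>) \<in> borel_measurable borel"
proof (rule measurable_compose[of "\<lambda>x::real. \<lfloor>x/d\<rfloor>" _ "count_space UNIV"])
  show "(\<lambda>x::real. \<lfloor>x/d\<rfloor>) \<in> borel \<rightarrow>\<^sub>M count_space UNIV" by measurable
qed simp

lemma gapprox_cmult:
  assumes P: "prob_space P" and sb: "sets P = sets borel"
    and f: "f \<in> borel_measurable borel" and g: "gapprox P f"
  shows "gapprox P (\<lambda>x. c * f x)"
  unfolding gapprox_def
proof (intro allI impI)
  interpret prob_space P by (rule P)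
  fix e :: real assume e: "e > 0"
  then obtain d0 where d0: "d0 > 0" "\<And>d. 0 < d \<Longrightarrow> d \<le> d0 \<Longrightarrow>
      (\<exists>\<phi>::int \<Rightarrow> real. measure P {x. \<phi> \<lfloor>x/d\<rfloor> \<noteq> f x} < e)"
    using g unfolding gapprox_def by meson
  show "\<exists>d0>0. \<forall>d. 0 < d \<longrightarrow> d \<le> d0 \<longrightarrow>
      (\<exists>\<phi>::int \<Rightarrow> real. measure P {x. \<phi> \<lfloor>x/d\<rfloor> \<noteq> c * f x} < e)"
  proof (rule exI[of _ d0], intro conjI allI impI)
    fix d :: real assume d: "0 < d" "d \<le> d0"
    then obtain \<phi> :: "int \<Rightarrow> real" where \<phi>: "measure P {x. \<phi> \<lfloor>x/d\<rfloor> \<noteq> f x} < e"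
      using d0 by blast
    have meas: "{x. \<phi> \<lfloor>x/d\<rfloor> \<noteq> f x} \<in> sets P" unfolding sb using f by measurable
    have "measure P {x. c * \<phi> \<lfloor>x/d\<rfloor> \<noteq> c * f x} \<le> measure P {x. \<phi> \<lfloor>x/d\<rfloor> \<noteq> f x}"
      by (rule finite_measure_mono[OF _ meas]) auto
    then show "\<exists>\<phi>::int \<Rightarrow> real. measure P {x. \<phi> \<lfloor>x/d\<rfloor> \<noteq> c * f x} < e"
      using \<phi> by (intro exI[of _ "\<lambda>k. c * \<phi> k"]) simp
  qed (use d0 in simp)
qed

lemma gapprox_add:
  assumes P: "prob_space P" and sb: "sets P = sets borel"
    and f: "f \<in> borel_measurable borel" and g: "g \<in> borel_measurable borel"
    and af: "gapprox P f" and ag: "gapprox P g"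
  shows "gapprox P (\<lambda>x. f x + g x)"
  unfolding gapprox_def
proof (intro allI impI)
  interpret prob_space P by (rule P)
  fix e :: real assume e: "e > 0"
  then have e2: "e/2 > 0" by simp
  obtain d1 where d1: "d1 > 0" "\<And>d. 0 < d \<Longrightarrow> d \<le> d1 \<Longrightarrow>
      (\<exists>\<phi>::int \<Rightarrow> real. measure P {x. \<phi> \<lfloor>x/d\<rfloor> \<noteq> f x} < e/2)"
    using af e2 unfolding gapprox_def by meson
  obtain d2 where d2: "d2 > 0" "\<And>d. 0 < d \<Longrightarrow> d \<le> d2 \<Longrightarrow>
      (\<exists>\<phi>::int \<Rightarrow> real. measure P {x. \<phi> \<lfloor>x/d\<rfloor> \<noteq> g x} < e/2)"
    using ag e2 unfolding gapprox_def by meson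
  show "\<exists>d0>0. \<forall>d. 0 < d \<longrightarrow> d \<le> d0 \<longrightarrow>
      (\<exists>\<phi>::int \<Rightarrow> real. measure P {x. \<phi> \<lfloor>x/d\<rfloor> \<noteq> f x + g x} < e)"
  proof (rule exI[of _ "min d1 d2"], intro conjI allI impI)
    fix d :: real assume d: "0 < d" "d \<le> min d1 d2"
    obtain \<phi> :: "int \<Rightarrow> real" where \<phi>: "measure P {x. \<phi> \<lfloor>x/d\<rfloor> \<noteq> f x} < e/2"
      using d1 d by auto
    obtain \<psi> :: "int \<Rightarrow> real" where \<psi>: "measure P {x. \<psi> \<lfloor>x/d\<rfloor> \<noteq> g x} < e/2"
      using d2 d by auto
    have m1: "{x. \<phi> \<lfloor>x/d\<rfloor> \<noteq> f x} \<in> sets P" unfolding sb using f by measurable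
    have m2: "{x. \<psi> \<lfloor>x/d\<rfloor> \<noteq> g x} \<in> sets P" unfolding sb using g by measurable
    have "measure P {x. \<phi> \<lfloor>x/d\<rfloor> + \<psi> \<lfloor>x/d\<rfloor> \<noteq> f x + g x}
          \<le> measure P ({x. \<phi> \<lfloor>x/d\<rfloor> \<noteq> f x} \<union> {x. \<psi> \<lfloor>x/d\<rfloor> \<noteq> g x})"
      by (rule finite_measure_mono) (use m1 m2 in auto)
    also have "\<dots> \<le> measure P {x. \<phi> \<lfloor>x/d\<rfloor> \<noteq> f x} + measure P {x. \<psi> \<lfloor>x/d\<rfloor> \<noteq> g x}"
      using m1 m2 by (intro measure_subadditive) auto
    finally show "\<exists>\<phi>::int \<Rightarrow> real. measure P {x. \<phi> \<lfloor>x/d\<rfloor> \<noteq> f x + g x} < e"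
      using \<phi> \<psi> by (intro exI[of _ "\<lambda>k. \<phi> k + \<psi> k"]) simp
  qed (use d1 d2 in simp)
qed

lemma gapprox_zero: "prob_space P \<Longrightarrow> gapprox P (\<lambda>x. 0)"
  unfolding gapprox_def
  by (intro allI impI exI[of _ "1::real"] conjI) (auto intro!: exI[of _ "\<lambda>k. 0"])

lemma gapprox_sum:
  assumes P: "prob_space P" and sb: "sets P = sets borel"
    and ind: "\<And>A. A \<in> sets borel \<Longrightarrow> gapprox P (indicator A)"
    and R: "finite R" and A: "\<And>c. c \<in> R \<Longrightarrow> A c \<in> sets borel"
  shows "gapprox P (\<lambda>x. \<Sum>c\<in>R. c * indicator (A c) x)"
  using R A
proof (induction R rule: finite_induct)
  case empty
  then show ?case using gapprox_zero[OF P] by simp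
next
  case (insert c R)
  have eq: "(\<lambda>x. \<Sum>c\<in>insert c R. c * indicator (A c) x)
     = (\<lambda>x. c * indicator (A c) x + (\<Sum>c\<in>R. c * indicator (A c) x))"
    by (rule ext) (simp only: sum.insert[OF insert.hyps])
  have "gapprox P (\<lambda>x. c * indicator (A c) x + (\<Sum>c\<in>R. c * indicator (A c) x))"
  proof (rule gapprox_add[OF P sb])
    show "(\<lambda>x. c * indicator (A c) x) \<in> borel_measurable borel" using insert by measurable
    show "(\<lambda>x. \<Sum>c\<in>R. c * indicator (A c) x) \<in> borel_measurable borel"
      using insert by measurable
    show "gapprox P (\<lambda>x. c * indicator (A c) x)"
      using insert by (intro gapprox_cmult[OF P sb] ind) (auto intro: borel_measurable_indicator)
    show "gapprox P (\<lambda>x. \<Sum>c\<in>R. c * indicator (A c) x)" using insert by simp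
  qed
  then show ?case unfolding eq .
qed

lemma finite_range_repr:
  fixes s :: "real \<Rightarrow> real"
  assumes "finite (range s)"
  shows "s x = (\<Sum>c\<in>range s. c * indicator (s -` {c}) x)"
proof -
  have "(\<Sum>c\<in>range s. c * indicator (s -` {c}) x) = (\<Sum>c\<in>range s. if c = s x then c else 0)"
    by (intro sum.cong) (auto simp: indicator_def)
  also have "\<dots> = s x" using assms by (simp add: sum.delta')
  finally show ?thesis by simp
qed

lemma powr3_le:
  fixes a b c p :: real
  assumes "a \<ge> 0" "b \<ge> 0" "c \<ge> 0" "p > 0"
  shows "(a + b + c) powr p \<le> 3 powr p * (a powr p + b powr p + c powr p)"
proof -
  define m where "m = max a (max b c)"
  have "a + b + c \<le> 3 * m" unfolding m_def by linarith
  then have "(a + b + c) powr p \<le> (3 * m) powr p"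
    using assms by (intro powr_mono2) auto
  also have "\<dots> = 3 powr p * m powr p" using assms unfolding m_def by (simp add: powr_mult)
  also have "m powr p \<le> a powr p + b powr p + c powr p"
    unfolding m_def using assms by (auto simp: max_def)
  then have "3 powr p * m powr p \<le> 3 powr p * (a powr p + b powr p + c powr p)"
    by (intro mult_left_mono) auto
  finally show ?thesis .
qed

lemma gapprox_indicator:
  assumes P: "prob_space (P::real measure)" and sb: "sets P = sets borel" and A: "A \<in> sets borel"
  shows "gapprox P (indicator A)"
  unfolding gapprox_def
proof (intro allI impI)
  fix e :: real assume e: "e > 0"
  obtain d0 where d0: "d0 > 0" "\<And>d. 0 < d \<Longrightarrow> d \<le> d0 \<Longrightarrow>
      (\<exists>Ks::int set. measure P ((A - {x. \<lfloor>x/d\<rfloor> \<in> Ks}) \<union> ({x. \<lfloor>x/d\<rfloor> \<in> Ks} - A)) < e)"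
    using indicator_grid_approx[OF P sb A e] by blast
  show "\<exists>d0>0. \<forall>d. 0 < d \<longrightarrow> d \<le> d0 \<longrightarrow>
      (\<exists>\<phi>::int \<Rightarrow> real. measure P {x. \<phi> \<lfloor>x/d\<rfloor> \<noteq> indicator A x} < e)"
  proof (rule exI[of _ d0], intro conjI allI impI)
    fix d :: real assume d: "0 < d" "d \<le> d0"
    then obtain Ks :: "int set" where
      Ks: "measure P ((A - {x. \<lfloor>x/d\<rfloor> \<in> Ks}) \<union> ({x. \<lfloor>x/d\<rfloor> \<in> Ks} - A)) < e"
      using d0 by blast
    have "{x. (indicator Ks \<lfloor>x/d\<rfloor> :: real) \<noteq> indicator A x}
        = (A - {x. \<lfloor>x/d\<rfloor> \<in> Ks}) \<union> ({x. \<lfloor>x/d\<rfloor> \<in> Ks} - A)"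
      by (auto simp: indicator_def)
    then show "\<exists>\<phi>::int \<Rightarrow> real. measure P {x. \<phi> \<lfloor>x/d\<rfloor> \<noteq> indicator A x} < e"
      using Ks by (intro exI[of _ "indicator Ks"]) simp
  qed (use d0 in simp)
qed

lemma gapprox_simple:
  assumes P: "prob_space (P::real measure)" and sb: "sets P = sets borel"
    and s: "s \<in> borel_measurable borel" and fin: "finite (range s)"
  shows "gapprox P s"
proof -
  have eq: "s = (\<lambda>x. \<Sum>c\<in>range s. c * indicator (s -` {c}) x)"
    by (intro ext) (rule finite_range_repr[OF fin])
  have "gapprox P (\<lambda>x. \<Sum>c\<in>range s. c * indicator (s -` {c}) x)"
  proof (rule gapprox_sum[OF P sb _ fin])
    show "\<And>A. A \<in> sets borel \<Longrightarrow> gapprox P (indicator A)"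
      by (rule gapprox_indicator[OF P sb])
    fix c show "s -` {c} \<in> sets borel"
      using borel_measurable_vimage[OF s, of c] by simp
  qed
  then show ?thesis by (simp only: eq[symmetric])
qed

lemma frac_bounds:
  fixes d x :: real
  assumes "d > 0"
  shows "0 \<le> x - d * \<lfloor>x/d\<rfloor>" "x - d * \<lfloor>x/d\<rfloor> < d"
proof -
  have h: "real_of_int \<lfloor>x/d\<rfloor> \<le> x/d" "x/d < real_of_int \<lfloor>x/d\<rfloor> + 1"
    using floor_correct[of "x/d"] by auto
  have "d * real_of_int \<lfloor>x/d\<rfloor> \<le> d * (x/d)" using h(1) assms by (intro mult_left_mono) auto
  then show "0 \<le> x - d * \<lfloor>x/d\<rfloor>" using assms by simp
  have "d * (x/d) < d * (real_of_int \<lfloor>x/d\<rfloor> + 1)" using h(2) assms by (intro mult_strict_left_mono) auto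
  then show "x - d * \<lfloor>x/d\<rfloor> < d" using assms by (simp add: algebra_simps)
qed

lemma quant_bound:
  fixes z :: real and m :: real
  assumes "m > 0"
  shows "\<bar>real_of_int \<lfloor>m * z\<rfloor> / m - z\<bar> \<le> 1 / m"
proof -
  have h: "real_of_int \<lfloor>m*z\<rfloor> \<le> m*z" "m*z < real_of_int \<lfloor>m*z\<rfloor> + 1"
    using floor_correct[of "m*z"] by auto
  have "real_of_int \<lfloor>m * z\<rfloor> / m - z = (real_of_int \<lfloor>m * z\<rfloor> - m * z) / m"
    using assms by (simp add: field_simps)
  moreover have "\<bar>real_of_int \<lfloor>m * z\<rfloor> - m * z\<bar> \<le> 1" using h by linarith
  ultimately show ?thesis using assms by (simp add: abs_div_pos divide_right_mono)
qed

lemma trunc_bounds: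
  fixes y :: real and n :: real
  assumes "n \<ge> 0"
  shows "\<bar>max (- n) (min n y) - y\<bar> \<le> \<bar>y\<bar>" "\<bar>max (- n) (min n y)\<bar> \<le> n"
    "\<bar>y\<bar> \<le> n \<Longrightarrow> max (- n) (min n y) = y"
  using assms by auto

lemma quant_range:
  fixes m n :: nat and z :: real
  assumes "\<bar>z\<bar> \<le> real n"
  shows "\<lfloor>real m * z\<rfloor> \<in> {- int (m * n) .. int (m * n)}"
proof -
  have a: "\<bar>real m * z\<bar> \<le> real (m * n)" using assms
    by (simp add: abs_mult mult_left_mono)
  have h: "real_of_int \<lfloor>real m * z\<rfloor> \<le> real m * z" "real m * z < real_of_int \<lfloor>real m * z\<rfloor> + 1"
    using floor_correct[of "real m * z"] by auto
  have a2: "real m * z \<le> real (m * n)" "- real (m * n) \<le> real m * z" using a by (simp_all add: abs_le_iff)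
  have "real_of_int \<lfloor>real m * z\<rfloor> \<le> real (m*n)" using a2(1) h(1) by linarith
  then have "real_of_int \<lfloor>real m * z\<rfloor> \<le> real_of_int (int (m*n))" by (simp only: of_int_of_nat_eq)
  then have u: "\<lfloor>real m * z\<rfloor> \<le> int (m*n)" by (simp only: of_int_le_iff)
  have "- real (m*n) < real_of_int \<lfloor>real m * z\<rfloor> + 1" using a2(2) h(2) by linarith
  then have "real_of_int (- int (m*n)) < real_of_int (\<lfloor>real m * z\<rfloor> + 1)"
    by (simp only: of_int_minus of_int_add of_int_of_nat_eq of_int_1)
  then have "- int (m*n) < \<lfloor>real m * z\<rfloor> + 1" by (simp only: of_int_less_iff)
  with u show ?thesis by simp
qed

theorem theorem1:
  fixes p :: real and P :: "real measure" and M :: real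
  assumes "1 \<le> p"
    and "prob_space P" and "sets P = sets borel"
    and "M \<ge> 0"
  shows "\<forall>X. Lp_mem P p X \<longrightarrow> (\<forall>\<epsilon>>0. \<exists>Y. M_sensitive P M Y \<and> Lp_norm P p (\<lambda>x. Y x - X x) < \<epsilon>)"
proof (intro allI impI)
  fix X :: "real \<Rightarrow> real" and \<epsilon> :: real
  assume Xm: "Lp_mem P p X" and \<epsilon>: "\<epsilon> > 0"
  note P = assms(2) and sb = assms(3)
  interpret prob_space P by (rule P)
  have p0: "p > 0" using assms(1) by simp
  have mP: "\<And>f::real \<Rightarrow> real. f \<in> borel_measurable P \<longleftrightarrow> f \<in> borel_measurable borel"
    by (simp only: measurable_cong_sets[OF sb refl])
  have XB[measurable]: "X \<in> borel_measurable borel" using Xm mP unfolding Lp_mem_def by simp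
  have Xint: "integrable P (\<lambda>x. \<bar>X x\<bar> powr p)" using Xm unfolding Lp_mem_def by simp
  define t where "t = \<epsilon> powr p / (4 * 3 powr p)"
  have t: "t > 0" unfolding t_def using \<epsilon> by simp
  define r where "r = t powr (1/p)"
  have r: "r > 0" unfolding r_def using t by simp
  have rp: "r powr p = t" unfolding r_def using t p0 by (simp add: powr_powr)
  define T where "T = (\<lambda>(n::nat) (y::real). max (- real n) (min (real n) y))"
  have TB[measurable]: "\<And>n. (\<lambda>x. T n (X x)) \<in> borel_measurable borel" unfolding T_def by measurable
  have lim: "(\<lambda>i. integral\<^sup>L P (\<lambda>x. \<bar>T i (X x) - X x\<bar> powr p)) \<longlonglongrightarrow> integral\<^sup>L P (\<lambda>x. 0::real)"
  proof (rule integral_dominated_convergence[where w = "\<lambda>x. \<bar>X x\<bar> powr p"])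
    show "(\<lambda>x. 0::real) \<in> borel_measurable P" by simp
    show "\<And>i. (\<lambda>x. \<bar>T i (X x) - X x\<bar> powr p) \<in> borel_measurable P"
      unfolding mP by measurable
    show "integrable P (\<lambda>x. \<bar>X x\<bar> powr p)" by (rule Xint)
    show "AE x in P. (\<lambda>i. \<bar>T i (X x) - X x\<bar> powr p) \<longlonglongrightarrow> 0"
    proof (rule AE_I2)
      fix x
      have "eventually (\<lambda>i. \<bar>T i (X x) - X x\<bar> powr p = 0) sequentially"
        unfolding eventually_sequentially
      proof (intro exI allI impI)
        fix i assume "nat \<lceil>\<bar>X x\<bar>\<rceil> \<le> i"
        then have "\<bar>X x\<bar> \<le> real i" by linarith
        then show "\<bar>T i (X x) - X x\<bar> powr p = 0" unfolding T_def by simp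
      qed
      then show "(\<lambda>i. \<bar>T i (X x) - X x\<bar> powr p) \<longlonglongrightarrow> 0" by (rule tendsto_eventually)
    qed
    fix i
    show "AE x in P. norm (\<bar>T i (X x) - X x\<bar> powr p) \<le> \<bar>X x\<bar> powr p"
    proof (rule AE_I2)
      fix x
      have "\<bar>T i (X x) - X x\<bar> \<le> \<bar>X x\<bar>" unfolding T_def by (rule trunc_bounds) simp
      then show "norm (\<bar>T i (X x) - X x\<bar> powr p) \<le> \<bar>X x\<bar> powr p"
        using p0 by (simp add: powr_mono2)
    qed
  qed
  then have "eventually (\<lambda>i. integral\<^sup>L P (\<lambda>x. \<bar>T i (X x) - X x\<bar> powr p) < t) sequentially"
    using t by (intro order_tendstoD(2)) auto
  then obtain n where n: "integral\<^sup>L P (\<lambda>x. \<bar>T n (X x) - X x\<bar> powr p) < t"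
    unfolding eventually_sequentially by auto
  have intTX: "integrable P (\<lambda>x. \<bar>T n (X x) - X x\<bar> powr p)"
  proof (rule Bochner_Integration.integrable_bound[OF Xint])
    show "(\<lambda>x. \<bar>T n (X x) - X x\<bar> powr p) \<in> borel_measurable P" unfolding mP by measurable
    show "AE x in P. norm (\<bar>T n (X x) - X x\<bar> powr p) \<le> norm (\<bar>X x\<bar> powr p)"
    proof (rule AE_I2)
      fix x
      have "\<bar>T n (X x) - X x\<bar> \<le> \<bar>X x\<bar>" unfolding T_def by (rule trunc_bounds) simp
      then show "norm (\<bar>T n (X x) - X x\<bar> powr p) \<le> norm (\<bar>X x\<bar> powr p)"
        using p0 by (simp add: powr_mono2)
    qed
  qed
  obtain m :: nat where m: "2 / r < real m" using reals_Archimedean2 by blast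
  have m0: "real m > 0" using m r by (smt (verit) divide_pos_pos)
  have m1: "1 / real m \<le> r / 2" using m r m0 by (simp add: field_simps)
  have m1': "1 / real m \<le> 1" using m0 by simp
  define s where "s = (\<lambda>x. real_of_int \<lfloor>real m * T n (X x)\<rfloor> / real m)"
  have sB[measurable]: "s \<in> borel_measurable borel" unfolding s_def by measurable
  have Tn: "\<And>x. \<bar>T n (X x)\<bar> \<le> real n" unfolding T_def by (rule trunc_bounds) simp
  have s_close: "\<And>x. \<bar>s x - T n (X x)\<bar> \<le> 1 / real m"
    unfolding s_def using quant_bound[OF m0] by blast
  define B where "B = real n + 1"
  have B0: "B > 0" unfolding B_def by simp
  have s_bd: "\<And>x. \<bar>s x\<bar> \<le> B"
  proof -
    fix x show "\<bar>s x\<bar> \<le> B" using s_close[of x] Tn[of x] m1' unfolding B_def by linarith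
  qed
  have fin: "finite (range s)"
  proof (rule finite_subset)
    show "range s \<subseteq> (\<lambda>k. real_of_int k / real m) ` {- int (m * n) .. int (m * n)}"
    proof
      fix y assume "y \<in> range s"
      then obtain x where x: "y = s x" by blast
      show "y \<in> (\<lambda>k. real_of_int k / real m) ` {- int (m * n) .. int (m * n)}"
        unfolding x s_def by (rule imageI[OF quant_range[OF Tn]])
    qed
  qed simp
  have gs: "gapprox P s" by (rule gapprox_simple[OF P sb sB fin])
  define e' where "e' = t / (2 * B) powr p"
  have e': "e' > 0" unfolding e'_def using t B0 by simp
  obtain d0 where d0: "d0 > 0" "\<And>d. 0 < d \<Longrightarrow> d \<le> d0 \<Longrightarrow>
      (\<exists>\<phi>::int \<Rightarrow> real. measure P {x. \<phi> \<lfloor>x/d\<rfloor> \<noteq> s x} < e')"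
    using gs e' unfolding gapprox_def by meson
  define K where "K = M + 1"
  have K: "K > 0" "K > M" unfolding K_def using assms(4) by auto
  define d where "d = min d0 (r / (2 * K))"
  have d: "d > 0" "d \<le> d0" unfolding d_def using d0 r K by auto
  have Kd: "K * d \<le> r / 2"
  proof -
    have "d \<le> r / (2 * K)" unfolding d_def by simp
    then have "K * d \<le> K * (r / (2 * K))" using K by (intro mult_left_mono) auto
    then show ?thesis using K by simp
  qed
  obtain \<phi> :: "int \<Rightarrow> real" where \<phi>: "measure P {x. \<phi> \<lfloor>x/d\<rfloor> \<noteq> s x} < e'"
    using d0(2)[OF d] by blast
  define \<psi> where "\<psi> = (\<lambda>k. max (- B) (min B (\<phi> k)))"
  have \<psi>_bd: "\<And>k. \<bar>\<psi> k\<bar> \<le> B" unfolding \<psi>_def using B0 by auto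
  define bad where "bad = {x. \<psi> \<lfloor>x/d\<rfloor> \<noteq> s x}"
  have bad_meas: "bad \<in> sets P" unfolding bad_def sb by measurable
  have bad_sub: "bad \<subseteq> {x. \<phi> \<lfloor>x/d\<rfloor> \<noteq> s x}"
  proof
    fix x assume "x \<in> bad"
    moreover have "\<phi> \<lfloor>x/d\<rfloor> = s x \<Longrightarrow> \<psi> \<lfloor>x/d\<rfloor> = s x"
      unfolding \<psi>_def using s_bd[of x] by auto
    ultimately show "x \<in> {x. \<phi> \<lfloor>x/d\<rfloor> \<noteq> s x}" unfolding bad_def by auto
  qed
  have bad_small: "measure P bad < e'"
  proof -
    have "{x. \<phi> \<lfloor>x/d\<rfloor> \<noteq> s x} \<in> sets P" unfolding sb by measurable
    then have "measure P bad \<le> measure P {x. \<phi> \<lfloor>x/d\<rfloor> \<noteq> s x}"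
      using bad_sub by (intro finite_measure_mono) auto
    then show ?thesis using \<phi> by simp
  qed
  define Y where "Y = sawY \<psi> d K"
  have YB[measurable]: "Y \<in> borel_measurable borel" unfolding Y_def by (rule sawY_measurable)
  have pw: "\<And>x. \<bar>Y x - X x\<bar> powr p
      \<le> 3 powr p * (t + (2 * B) powr p * indicator bad x + \<bar>T n (X x) - X x\<bar> powr p)"
  proof -
    fix x
    have fb: "0 \<le> x - d * \<lfloor>x/d\<rfloor>" "x - d * \<lfloor>x/d\<rfloor> < d" using frac_bounds[OF d(1)] by auto
    have saw: "0 \<le> K * (x - d * \<lfloor>x/d\<rfloor>)" "K * (x - d * \<lfloor>x/d\<rfloor>) \<le> r / 2"
    proof -
      show "0 \<le> K * (x - d * \<lfloor>x/d\<rfloor>)" using fb K by simp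
      have "K * (x - d * \<lfloor>x/d\<rfloor>) \<le> K * d" using fb K by (intro mult_left_mono) auto
      then show "K * (x - d * \<lfloor>x/d\<rfloor>) \<le> r / 2" using Kd by simp
    qed
    have ind: "\<bar>\<psi> \<lfloor>x/d\<rfloor> - s x\<bar> \<le> 2 * B * indicator bad x"
    proof (cases "x \<in> bad")
      case True
      then show ?thesis using \<psi>_bd[of "\<lfloor>x/d\<rfloor>"] s_bd[of x] by simp
    next
      case False
      then show ?thesis unfolding bad_def by simp
    qed
    have eqY: "Y x - X x = K * (x - d * \<lfloor>x/d\<rfloor>) + (\<psi> \<lfloor>x/d\<rfloor> - s x) + (s x - T n (X x)) + (T n (X x) - X x)"
      unfolding Y_def sawY_def by simp
    have "\<bar>Y x - X x\<bar> \<le> r + 2 * B * indicator bad x + \<bar>T n (X x) - X x\<bar>"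
      using eqY saw ind s_close[of x] m1 by linarith
    then have "\<bar>Y x - X x\<bar> powr p \<le> (r + 2 * B * indicator bad x + \<bar>T n (X x) - X x\<bar>) powr p"
      using p0 by (intro powr_mono2) auto
    also have "\<dots> \<le> 3 powr p * (r powr p + (2 * B * indicator bad x) powr p + \<bar>T n (X x) - X x\<bar> powr p)"
      using r B0 p0 by (intro powr3_le) auto
    also have "(2 * B * indicator bad x) powr p = (2 * B) powr p * indicator bad x"
      using p0 by (cases "x \<in> bad") auto
    finally show "\<bar>Y x - X x\<bar> powr p
      \<le> 3 powr p * (t + (2 * B) powr p * indicator bad x + \<bar>T n (X x) - X x\<bar> powr p)"
      using rp by simp
  qed
  have bad_fin: "emeasure P bad < \<top>" using emeasure_finite[of bad] by (simp add: less_top[symmetric])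
  have int_ind0: "integrable P (indicator bad :: real \<Rightarrow> real)"
    using bad_meas emeasure_finite[of bad] by (auto intro!: integrable_real_indicator simp: less_top[symmetric])
  have int_ind: "integrable P (\<lambda>x. (2 * B) powr p * indicator bad x :: real)"
    using int_ind0 by (rule integrable_mult_right)
  have int_t: "integrable P (\<lambda>x. t)" by simp
  have int_tg: "integrable P (\<lambda>x. t + (2 * B) powr p * indicator bad x)"
    using int_t int_ind by (rule Bochner_Integration.integrable_add)
  have int_F: "integrable P (\<lambda>x. t + (2 * B) powr p * indicator bad x + \<bar>T n (X x) - X x\<bar> powr p)"
    using int_tg intTX by (rule Bochner_Integration.integrable_add)
  have int_rhs: "integrable P (\<lambda>x. 3 powr p * (t + (2 * B) powr p * indicator bad x + \<bar>T n (X x) - X x\<bar> powr p))"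
    using int_F by (rule integrable_mult_right)
  have int_lhs: "integrable P (\<lambda>x. \<bar>Y x - X x\<bar> powr p)"
  proof (rule Bochner_Integration.integrable_bound[OF int_rhs])
    show "(\<lambda>x. \<bar>Y x - X x\<bar> powr p) \<in> borel_measurable P" unfolding mP by measurable
    show "AE x in P. norm (\<bar>Y x - X x\<bar> powr p)
       \<le> norm (3 powr p * (t + (2 * B) powr p * indicator bad x + \<bar>T n (X x) - X x\<bar> powr p))"
    proof (rule AE_I2)
      fix x
      have "0 \<le> \<bar>Y x - X x\<bar> powr p" by simp
      moreover have "0 \<le> 3 powr p * (t + (2 * B) powr p * indicator bad x + \<bar>T n (X x) - X x\<bar> powr p)"
        using t by simp
      ultimately show "norm (\<bar>Y x - X x\<bar> powr p)
       \<le> norm (3 powr p * (t + (2 * B) powr p * indicator bad x + \<bar>T n (X x) - X x\<bar> powr p))"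
        using pw[of x] by simp
    qed
  qed
  have "integral\<^sup>L P (\<lambda>x. \<bar>Y x - X x\<bar> powr p)
      \<le> integral\<^sup>L P (\<lambda>x. 3 powr p * (t + (2 * B) powr p * indicator bad x + \<bar>T n (X x) - X x\<bar> powr p))"
    using int_lhs int_rhs pw by (intro integral_mono) auto
  also have "\<dots> = 3 powr p * (t + (2 * B) powr p * measure P bad
      + integral\<^sup>L P (\<lambda>x. \<bar>T n (X x) - X x\<bar> powr p))"
  proof -
    have I1: "integral\<^sup>L P (\<lambda>x. 3 powr p * (t + (2 * B) powr p * indicator bad x + \<bar>T n (X x) - X x\<bar> powr p))
        = 3 powr p * integral\<^sup>L P (\<lambda>x. t + (2 * B) powr p * indicator bad x + \<bar>T n (X x) - X x\<bar> powr p)"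
      by (rule integral_mult_right_zero)
    have I2: "integral\<^sup>L P (\<lambda>x. t + (2 * B) powr p * indicator bad x + \<bar>T n (X x) - X x\<bar> powr p)
        = integral\<^sup>L P (\<lambda>x. t + (2 * B) powr p * indicator bad x) + integral\<^sup>L P (\<lambda>x. \<bar>T n (X x) - X x\<bar> powr p)"
      using int_tg intTX by (rule Bochner_Integration.integral_add)
    have I3: "integral\<^sup>L P (\<lambda>x. t + (2 * B) powr p * indicator bad x)
        = integral\<^sup>L P (\<lambda>x. t) + integral\<^sup>L P (\<lambda>x. (2 * B) powr p * indicator bad x)"
      using int_t int_ind by (rule Bochner_Integration.integral_add)
    have I4: "integral\<^sup>L P (\<lambda>x. (2 * B) powr p * indicator bad x :: real) = (2 * B) powr p * measure P bad"
    proof -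
      have "integral\<^sup>L P (\<lambda>x. (2 * B) powr p * indicator bad x :: real) = (2 * B) powr p * integral\<^sup>L P (indicator bad :: real \<Rightarrow> real)"
        by (rule integral_mult_right_zero)
      also have "integral\<^sup>L P (indicator bad :: real \<Rightarrow> real) = measure P bad"
        using bad_meas by (simp add: sets.Int_space_eq2)
      finally show ?thesis .
    qed
    have I5: "integral\<^sup>L P (\<lambda>x. t) = t" by (simp add: prob_space)
    show ?thesis unfolding I1 I2 I3 I4 I5 by simp
  qed
  also have "\<dots> < 3 powr p * (t + t + t)"
  proof -
    have "(2 * B) powr p * measure P bad < (2 * B) powr p * e'"
      using bad_small B0 by (intro mult_strict_left_mono) auto
    also have "(2 * B) powr p * e' = t" unfolding e'_def using B0 by simp
    finally show ?thesis using n by simp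
  qed
  also have "\<dots> < \<epsilon> powr p" unfolding t_def using \<epsilon> by simp
  finally have lt: "integral\<^sup>L P (\<lambda>x. \<bar>Y x - X x\<bar> powr p) < \<epsilon> powr p" .
  have "Lp_norm P p (\<lambda>x. Y x - X x) < (\<epsilon> powr p) powr (1/p)"
    unfolding Lp_norm_def using lt p0 by (intro powr_less_mono2) auto
  also have "(\<epsilon> powr p) powr (1/p) = \<epsilon>" using \<epsilon> p0 by (simp add: powr_powr)
  finally have norm_lt: "Lp_norm P p (\<lambda>x. Y x - X x) < \<epsilon>" .
  have sens: "M_sensitive P M Y"
    unfolding M_sensitive_def
  proof (intro conjI allI impI)
    show "Linfty P Y" unfolding Linfty_def
    proof
      show "Y \<in> borel_measurable P" unfolding mP by (rule YB)
      show "\<exists>C. AE x in P. \<bar>Y x\<bar> \<le> C"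
      proof (intro exI AE_I2)
        fix x
        have fb: "0 \<le> x - d * \<lfloor>x/d\<rfloor>" "x - d * \<lfloor>x/d\<rfloor> < d" using frac_bounds[OF d(1)] by auto
        have "K * (x - d * \<lfloor>x/d\<rfloor>) \<le> K * d" using fb K by (intro mult_left_mono) auto
        moreover have "0 \<le> K * (x - d * \<lfloor>x/d\<rfloor>)" using fb K by simp
        ultimately show "\<bar>Y x\<bar> \<le> B + K * d"
          unfolding Y_def sawY_def using \<psi>_bd[of "\<lfloor>x/d\<rfloor>"] by linarith
      qed
    qed
    show "AE x in lebesgue. Y differentiable (at x)" unfolding Y_def by (rule sawY_AE_diff[OF d(1)])
    fix x D assume "(Y has_real_derivative D) (at x)"
    then have "D = K" unfolding Y_def by (rule sawY_deriv[OF d(1)])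
    then show "\<bar>D\<bar> > M" using K assms(4) by simp
  qed
  show "\<exists>Y. M_sensitive P M Y \<and> Lp_norm P p (\<lambda>x. Y x - X x) < \<epsilon>"
    using sens norm_lt by blast
qed

end
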